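(* For a set $\mathcal{R}$ of languages over $\Sigma$ let $\dot{\overline{\mathcal{R}}}=\{\Sigma^*\setminus L\mid L\in\mathcal{R}\}$ (point-wise complement). (1) There exists a rational set of regular languages $\mathcal{R}$ such that $\dot{\overline{\mathcal{R}}}$ is not a rational set of regular languages. (2) If $\mathcal{R}$ is a finite rational set of regular languages, then $\dot{\overline{\mathcal{R}}}$ is a finite rational set of regular languages. (3) In the finite case a modified language substitution is in general required: there exist an alphabet $\Delta$, a regular language substitution $\varphi:\Delta\to2^{\Sigma^*}$ and a regular $K\subseteq\Delta^+$ with $\mathcal{R}=(K,\varphi)$ finite, such that there is no regular $K'\subseteq\Delta^+$ with $\dot{\overline{\mathcal{R}}}=(K',\varphi)$.
   Context: Alphabets are nonempty finite sets. A regular language substitution $\varphi:\Delta\to2^{\Sigma^*}$ maps each symbol to a regular language over $\Sigma$, extended by $\varphi(\delta w)=\varphi(\delta)\varphi(w)$. A set $\mathcal{R}$ of regular languages over $\Sigma$ is a rational set of regular languages, written $\mathcal{R}=(K,\varphi)$, if there are an alphabet $\Delta$, a regular $K\subseteq\Delta^+$ and a regular language substitution $\varphi$ with $\mathcal{R}=\{\varphi(w)\mid w\in K\}$. *)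

theory Defs
  imports Main
begin

definition conc :: "'a list set \<Rightarrow> 'a list set \<Rightarrow> 'a list set" where
  "conc A B = {u @ v | u v. u \<in> A \<and> v \<in> B}"

inductive regular :: "'a set \<Rightarrow> 'a list set \<Rightarrow> bool" for Sig :: "'a set" where
  reg_empty: "regular Sig {}"
| reg_eps: "regular Sig {[]}"
| reg_letter: "a \<in> Sig \<Longrightarrow> regular Sig {[a]}"
| reg_union: "regular Sig A \<Longrightarrow> regular Sig B \<Longrightarrow> regular Sig (A \<union> B)"
| reg_conc: "regular Sig A \<Longrightarrow> regular Sig B \<Longrightarrow> regular Sig (conc A B)"
| reg_star: "regular Sig A \<Longrightarrow> regular Sig (\<Union>n. ((\<lambda>X. conc A X) ^^ n) {[]})"

fun subst_word :: "('d \<Rightarrow> 'a list set) \<Rightarrow> 'd list \<Rightarrow> 'a list set" where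
  "subst_word phi [] = {[]}"
| "subst_word phi (d # w) = conc (phi d) (subst_word phi w)"

definition alphabet :: "'a set \<Rightarrow> bool" where
  "alphabet A \<longleftrightarrow> finite A \<and> A \<noteq> {}"

definition reg_subst :: "'d set \<Rightarrow> 'a set \<Rightarrow> ('d \<Rightarrow> 'a list set) \<Rightarrow> bool" where
  "reg_subst Del Sig phi \<longleftrightarrow> (\<forall>d\<in>Del. regular Sig (phi d))"

definition rat_of :: "'d list set \<Rightarrow> ('d \<Rightarrow> 'a list set) \<Rightarrow> 'a list set set" where
  "rat_of K phi = subst_word phi ` K"

definition reg_plus :: "'d set \<Rightarrow> 'd list set \<Rightarrow> bool" where
  "reg_plus Del K \<longleftrightarrow> regular Del K \<and> K \<subseteq> lists Del - {[]}"

text \<open>Rational set of regular languages over Sig; the alphabet Del is taken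
  as a finite nonempty set of natural numbers (any finite alphabet can be renamed into one).\<close>

definition rational_set :: "'a set \<Rightarrow> 'a list set set \<Rightarrow> bool" where
  "rational_set Sig R \<longleftrightarrow>
     (\<exists>(Del :: nat set) K phi. alphabet Del \<and> reg_plus Del K \<and>
        reg_subst Del Sig phi \<and> R = rat_of K phi)"

definition pcompl :: "'a set \<Rightarrow> 'a list set set \<Rightarrow> 'a list set set" where
  "pcompl Sig R = (\<lambda>L. lists Sig - L) ` R"

end

theory Submission
  imports Defs
begin


definition star :: "'a list set \<Rightarrow> 'a list set" where
  "star A = (\<Union>n. ((\<lambda>X. conc A X) ^^ n) {[]})"

lemma regular_star: "regular Sig A \<Longrightarrow> regular Sig (star A)"
  unfolding star_def by (rule reg_star)

lemma conc_iff: "x \<in> conc A B \<longleftrightarrow> (\<exists>u v. x = u @ v \<and> u \<in> A \<and> v \<in> B)"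
  by (auto simp: conc_def)

lemma concI: "u \<in> A \<Longrightarrow> v \<in> B \<Longrightarrow> u @ v \<in> conc A B"
  by (auto simp: conc_def)

lemma conc_eps_right[simp]: "conc A {[]} = A"
  by (auto simp: conc_def)

lemma conc_eps_left[simp]: "conc {[]} A = A"
  by (auto simp: conc_def)

lemma conc_mono: "A \<subseteq> A' \<Longrightarrow> B \<subseteq> B' \<Longrightarrow> conc A B \<subseteq> conc A' B'"
  by (auto simp: conc_def)

lemma conc_assoc: "conc (conc A B) C = conc A (conc B C)"
  unfolding conc_def by (auto, metis append.assoc, metis append.assoc)

lemma Nil_in_conc: "[] \<in> conc A B \<longleftrightarrow> [] \<in> A \<and> [] \<in> B"
  by (auto simp: conc_def)

lemma star_Nil[simp]: "[] \<in> star A"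
  unfolding star_def by (auto intro: exI[of _ 0])

lemma star_step: "u \<in> A \<Longrightarrow> v \<in> star A \<Longrightarrow> u @ v \<in> star A"
proof -
  assume "u \<in> A" "v \<in> star A"
  then obtain n where "v \<in> ((\<lambda>X. conc A X) ^^ n) {[]}" unfolding star_def by auto
  then have "u @ v \<in> ((\<lambda>X. conc A X) ^^ Suc n) {[]}" using \<open>u \<in> A\<close> by (auto simp: conc_def)
  then show ?thesis unfolding star_def by blast
qed

lemma star_induct[consumes 1, case_names Nil step]:
  assumes "x \<in> star A" and "P []" and "\<And>u v. u \<in> A \<Longrightarrow> v \<in> star A \<Longrightarrow> P v \<Longrightarrow> P (u @ v)"
  shows "P x"
proof -
  obtain n where "x \<in> ((\<lambda>X. conc A X) ^^ n) {[]}" using assms(1) unfolding star_def by auto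
  then show ?thesis
  proof (induction n arbitrary: x)
    case 0 then show ?case using assms(2) by simp
  next
    case (Suc n)
    then obtain u v where "x = u @ v" "u \<in> A" "v \<in> ((\<lambda>X. conc A X) ^^ n) {[]}"
      by (auto simp: conc_def)
    moreover have "v \<in> star A" using calculation(3) unfolding star_def by blast
    ultimately show ?case using Suc.IH assms(3) by blast
  qed
qed

lemma star_app: "u \<in> star A \<Longrightarrow> v \<in> star A \<Longrightarrow> u @ v \<in> star A"
  by (induction u rule: star_induct) (auto intro: star_step)

lemma regular_sub: "regular Sig L \<Longrightarrow> L \<subseteq> lists Sig"
proof (induction rule: regular.induct)
  case (reg_star A)
  show ?case
  proof
    fix x assume "x \<in> (\<Union>n. ((\<lambda>X. conc A X) ^^ n) {[]})"
    then have "x \<in> star A" unfolding star_def .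
    then show "x \<in> lists Sig" by (induction rule: star_induct) (use reg_star in auto)
  qed
qed (force simp: conc_def)+

definition deriv :: "'a list \<Rightarrow> 'a list set \<Rightarrow> 'a list set" where
  "deriv w L = {v. w @ v \<in> L}"

lemma deriv_union: "deriv w (A \<union> B) = deriv w A \<union> deriv w B"
  by (auto simp: deriv_def)

lemma deriv_conc: "deriv w (conc A B) = conc (deriv w A) B \<union> \<Union> {deriv v B | u v. w = u @ v \<and> u \<in> A}"
proof (rule set_eqI, rule iffI)
  fix x assume "x \<in> deriv w (conc A B)"
  then obtain p q where pq: "w @ x = p @ q" "p \<in> A" "q \<in> B" by (auto simp: deriv_def conc_def)
  then obtain us where "(w = p @ us \<and> us @ x = q) \<or> (w @ us = p \<and> x = us @ q)"
    by (auto simp: append_eq_append_conv2)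
  then show "x \<in> conc (deriv w A) B \<union> \<Union> {deriv v B | u v. w = u @ v \<and> u \<in> A}"
  proof
    assume h: "w = p @ us \<and> us @ x = q"
    then have "x \<in> deriv us B" using pq by (auto simp: deriv_def)
    then show ?thesis using h pq by blast
  next
    assume h: "w @ us = p \<and> x = us @ q"
    then show ?thesis using pq by (auto simp: deriv_def conc_def)
  qed
next
  fix x assume "x \<in> conc (deriv w A) B \<union> \<Union> {deriv v B | u v. w = u @ v \<and> u \<in> A}"
  then show "x \<in> deriv w (conc A B)"
    by (auto simp: deriv_def conc_def) (metis append.assoc)+
qed

lemma deriv_star: "w \<noteq> [] \<Longrightarrow> deriv w (star A) = \<Union> {conc (deriv v A) (star A) | u v. w = u @ v \<and> u \<in> star A \<and> v \<noteq> []}"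
proof (rule set_eqI, rule iffI)
  fix x assume w: "w \<noteq> []" and "x \<in> deriv w (star A)"
  then have z: "w @ x \<in> star A" by (auto simp: deriv_def)
  have H: "\<forall>w x. z = w @ x \<and> w \<noteq> [] \<longrightarrow> (\<exists>u v. w = u @ v \<and> u \<in> star A \<and> v \<noteq> [] \<and> x \<in> conc (deriv v A) (star A))"
    if "z \<in> star A" for z
    using that
  proof (induction rule: star_induct)
    case Nil then show ?case by simp
  next
    case (step p q)
    show ?case
    proof (intro allI impI)
      fix w x assume h: "p @ q = w @ x \<and> w \<noteq> []"
      then obtain us where "(w = p @ us \<and> us @ x = q) \<or> (w @ us = p \<and> x = us @ q)"
        by (auto simp: append_eq_append_conv2)
      then show "\<exists>u v. w = u @ v \<and> u \<in> star A \<and> v \<noteq> [] \<and> x \<in> conc (deriv v A) (star A)"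
      proof
        assume h2: "w = p @ us \<and> us @ x = q"
        show ?thesis
        proof (cases "us = []")
          case True
          have "[] \<in> deriv w A" using h2 step.hyps(1) True by (simp add: deriv_def)
          moreover have "x \<in> star A" using h2 True step.hyps(2) by simp
          ultimately have "x \<in> conc (deriv w A) (star A)"
            using concI[of "[]" "deriv w A" x "star A"] by simp
          then show ?thesis using h by (intro exI[of _ "[]"] exI[of _ w]) auto
        next
          case False
          then obtain u v where "us = u @ v" "u \<in> star A" "v \<noteq> []" "x \<in> conc (deriv v A) (star A)"
            using step.IH h2 by blast
          then show ?thesis using h2 step.hyps(1)
            by (intro exI[of _ "p @ u"] exI[of _ v]) (auto intro: star_step)
        qed
      next
        assume h2: "w @ us = p \<and> x = us @ q"
        then have "x \<in> conc (deriv w A) (star A)" using step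
          by (auto simp: deriv_def conc_def)
        then show ?thesis using h by (intro exI[of _ "[]"] exI[of _ w]) auto
      qed
    qed
  qed
  obtain u v where "w = u @ v" "u \<in> star A" "v \<noteq> []" "x \<in> conc (deriv v A) (star A)"
    using H[OF z, rule_format, of w x] w by blast
  then show "x \<in> \<Union> {conc (deriv v A) (star A) | u v. w = u @ v \<and> u \<in> star A \<and> v \<noteq> []}"
    by blast
next
  fix x assume "x \<in> \<Union> {conc (deriv v A) (star A) | u v. w = u @ v \<and> u \<in> star A \<and> v \<noteq> []}"
  then obtain u v y z where "w = u @ v" "u \<in> star A" "v @ y \<in> A" "z \<in> star A" "x = y @ z"
    by (auto simp: deriv_def conc_def)
  then have "w @ x = u @ ((v @ y) @ z)" by simp
  moreover have "u @ ((v @ y) @ z) \<in> star A"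
    using \<open>u \<in> star A\<close> \<open>v @ y \<in> A\<close> \<open>z \<in> star A\<close> by (intro star_app star_step)
  ultimately show "x \<in> deriv w (star A)" by (simp add: deriv_def)
qed


lemma finite_derivs_star:
  assumes "finite (range (\<lambda>w. deriv w A))"
  shows "finite (range (\<lambda>w. deriv w (star A)))"
proof -
  let ?F = "insert (star A) ((\<lambda>T. \<Union> ((\<lambda>X. conc X (star A)) ` T)) ` Pow (range (\<lambda>w. deriv w A)))"
  have "range (\<lambda>w. deriv w (star A)) \<subseteq> ?F"
  proof
    fix Y assume "Y \<in> range (\<lambda>w. deriv w (star A))"
    then obtain w where Y: "Y = deriv w (star A)" by auto
    show "Y \<in> ?F"
    proof (cases "w = []")
      case True then show ?thesis using Y by (simp add: deriv_def)
    next
      case False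
      let ?T = "{deriv v A | u v. w = u @ v \<and> u \<in> star A \<and> v \<noteq> []}"
      have "Y = \<Union> ((\<lambda>X. conc X (star A)) ` ?T)"
        unfolding Y deriv_star[OF False] by blast
      moreover have "?T \<in> Pow (range (\<lambda>w. deriv w A))" by blast
      ultimately show ?thesis by blast
    qed
  qed
  moreover have "finite ?F" using assms by simp
  ultimately show ?thesis by (rule finite_subset)
qed

lemma finite_derivs_conc:
  assumes "finite (range (\<lambda>w. deriv w A))" "finite (range (\<lambda>w. deriv w B))"
  shows "finite (range (\<lambda>w. deriv w (conc A B)))"
proof -
  let ?F = "(\<lambda>(X, T). conc X B \<union> \<Union> T) ` (range (\<lambda>w. deriv w A) \<times> Pow (range (\<lambda>w. deriv w B)))"
  have "range (\<lambda>w. deriv w (conc A B)) \<subseteq> ?F"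
  proof
    fix Y assume "Y \<in> range (\<lambda>w. deriv w (conc A B))"
    then obtain w where Y: "Y = deriv w (conc A B)" by auto
    let ?T = "{deriv v B | u v. w = u @ v \<and> u \<in> A}"
    have "Y = (\<lambda>(X, T). conc X B \<union> \<Union> T) (deriv w A, ?T)"
      unfolding Y deriv_conc by simp
    moreover have "(deriv w A, ?T) \<in> range (\<lambda>w. deriv w A) \<times> Pow (range (\<lambda>w. deriv w B))" by blast
    ultimately show "Y \<in> ?F" by (rule image_eqI)
  qed
  moreover have "finite ?F" using assms by simp
  ultimately show ?thesis by (rule finite_subset)
qed

lemma finite_derivs_union:
  assumes "finite (range (\<lambda>w. deriv w A))" "finite (range (\<lambda>w. deriv w B))"
  shows "finite (range (\<lambda>w. deriv w (A \<union> B)))"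
proof -
  have "range (\<lambda>w. deriv w (A \<union> B)) \<subseteq> (\<lambda>(X, Y). X \<union> Y) ` (range (\<lambda>w. deriv w A) \<times> range (\<lambda>w. deriv w B))"
    unfolding deriv_union by auto
  moreover have "finite ((\<lambda>(X, Y). X \<union> Y) ` (range (\<lambda>w. deriv w A) \<times> range (\<lambda>w. deriv w B)))"
    using assms by simp
  ultimately show ?thesis by (rule finite_subset)
qed

lemma finite_derivs: "regular Sig L \<Longrightarrow> finite (range (\<lambda>w. deriv w L))"
proof (induction rule: regular.induct)
  case reg_empty
  have "range (\<lambda>w. deriv w ({}::'a list set)) \<subseteq> {{}}" by (auto simp: deriv_def)
  then show ?case by (rule finite_subset) simp
next
  case reg_eps
  have "range (\<lambda>w. deriv w {[]::'a list}) \<subseteq> {{}, {[]}}" by (auto simp: deriv_def)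
  then show ?case by (rule finite_subset) simp
next
  case (reg_letter a)
  have "range (\<lambda>w. deriv w {[a]}) \<subseteq> {{}, {[]}, {[a]}}"
  proof
    fix Y assume "Y \<in> range (\<lambda>w. deriv w {[a]})"
    then obtain w where Y: "Y = deriv w {[a]}" by auto
    show "Y \<in> {{}, {[]}, {[a]}}"
    proof (cases w)
      case Nil then show ?thesis using Y by (simp add: deriv_def)
    next
      case (Cons b w')
      then show ?thesis using Y by (cases w') (auto simp: deriv_def)
    qed
  qed
  then show ?case by (rule finite_subset) simp
next
  case (reg_union A B) then show ?case by (intro finite_derivs_union)
next
  case (reg_conc A B) then show ?case by (intro finite_derivs_conc)
next
  case (reg_star A) then show ?case using finite_derivs_star[of A] unfolding star_def by simp
qed


lemma regular_letters: "finite B \<Longrightarrow> B \<subseteq> Sig \<Longrightarrow> regular Sig ((\<lambda>a. [a]) ` B)"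
proof (induction B rule: finite_induct)
  case empty then show ?case by (simp add: reg_empty)
next
  case (insert a B)
  have "(\<lambda>a. [a]) ` insert a B = {[a]} \<union> (\<lambda>a. [a]) ` B" by auto
  have "a \<in> Sig" "B \<subseteq> Sig" using insert.prems by auto
  then show ?case using reg_union[OF reg_letter insert.IH] \<open>(\<lambda>a. [a]) ` insert a B = _\<close> by simp
qed

lemma regular_UN: "finite I \<Longrightarrow> (\<forall>i\<in>I. regular Sig (F i)) \<Longrightarrow> regular Sig (\<Union>i\<in>I. F i)"
proof (induction I rule: finite_induct)
  case empty then show ?case by (simp add: reg_empty)
next
  case (insert a B)
  then show ?case by (auto intro!: reg_union)
qed

definition paths :: "('s \<Rightarrow> 'a \<Rightarrow> 's) \<Rightarrow> 'a set \<Rightarrow> 's set \<Rightarrow> 's \<Rightarrow> 's \<Rightarrow> 'a list set" where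
  "paths \<delta> Sig S p q = {w \<in> lists Sig. foldl \<delta> p w = q \<and>
     (\<forall>i. 0 < i \<and> i < length w \<longrightarrow> foldl \<delta> p (take i w) \<in> S)}"

lemma paths_empty: "paths \<delta> Sig {} p q = (if p = q then {[]} else {}) \<union> (\<lambda>a. [a]) ` {a\<in>Sig. \<delta> p a = q}"
proof (rule set_eqI, rule iffI)
  fix w assume w: "w \<in> paths \<delta> Sig {} p q"
  show "w \<in> (if p = q then {[]} else {}) \<union> (\<lambda>a. [a]) ` {a\<in>Sig. \<delta> p a = q}"
  proof (cases w)
    case Nil then show ?thesis using w by (simp add: paths_def)
  next
    case (Cons a w')
    show ?thesis
    proof (cases w')
      case Nil then show ?thesis using w Cons by (auto simp: paths_def)
    next
      case (Cons b w'')
      then show ?thesis using w \<open>w = a # w'\<close> unfolding paths_def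
        by (auto dest!: spec[of _ 1])
    qed
  qed
next
  fix w assume "w \<in> (if p = q then {[]} else {}) \<union> (\<lambda>a. [a]) ` {a\<in>Sig. \<delta> p a = q}"
  then show "w \<in> paths \<delta> Sig {} p q" by (auto simp: paths_def split: if_splits)
qed

lemma foldl_take_add:
  "foldl \<delta> p (take (i + j) w) = foldl \<delta> (foldl \<delta> p (take i w)) (take j (drop i w))"
  by (simp add: take_add)

lemma paths_mono: "S \<subseteq> S' \<Longrightarrow> paths \<delta> Sig S p q \<subseteq> paths \<delta> Sig S' p q"
  by (auto simp: paths_def)

lemma paths_app:
  assumes "u \<in> paths \<delta> Sig S p s" "v \<in> paths \<delta> Sig S s q" "s \<in> S"
  shows "u @ v \<in> paths \<delta> Sig S p q"
proof -
  have "foldl \<delta> p (take i (u @ v)) \<in> S" if "0 < i" "i < length (u @ v)" for i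
  proof -
    consider "i < length u" | "i = length u" | "i > length u" by linarith
    then show ?thesis
    proof cases
      case 1 then show ?thesis using assms(1) that by (simp add: paths_def)
    next
      case 2 then show ?thesis using assms(1,3) by (simp add: paths_def)
    next
      case 3
      then have "take i (u @ v) = u @ take (i - length u) v" by simp
      then show ?thesis using assms that 3 unfolding paths_def by auto
    qed
  qed
  then show ?thesis using assms unfolding paths_def by auto
qed

lemma paths_split:
  assumes "w \<in> paths \<delta> Sig (insert s S) p q" "w \<notin> paths \<delta> Sig S p q"
  shows "\<exists>i. 0 < i \<and> i < length w \<and> take i w \<in> paths \<delta> Sig S p s \<and> drop i w \<in> paths \<delta> Sig (insert s S) s q"
proof -
  have "\<exists>i. 0 < i \<and> i < length w \<and> foldl \<delta> p (take i w) \<notin> S"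
    using assms unfolding paths_def by auto
  then obtain i where i: "0 < i \<and> i < length w \<and> foldl \<delta> p (take i w) \<notin> S"
    and min: "\<And>j. j < i \<Longrightarrow> \<not> (0 < j \<and> j < length w \<and> foldl \<delta> p (take j w) \<notin> S)"
    using exists_least_iff[of "\<lambda>i. 0 < i \<and> i < length w \<and> foldl \<delta> p (take i w) \<notin> S"] by blast
  have si: "foldl \<delta> p (take i w) = s" using i assms(1) unfolding paths_def by auto
  have wl: "w \<in> lists Sig" using assms(1) by (simp add: paths_def)
  have 1: "take i w \<in> paths \<delta> Sig S p s"
    unfolding paths_def using si wl i min by (auto dest: in_set_takeD)
  have 2: "drop i w \<in> paths \<delta> Sig (insert s S) s q"
  proof -
    have "foldl \<delta> s (drop i w) = q"
    proof -
      have "foldl \<delta> s (drop i w) = foldl \<delta> p w"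
        using si foldl_append[of \<delta> p "take i w" "drop i w"] by simp
      also have "\<dots> = q" using assms(1) by (simp add: paths_def)
      finally show ?thesis .
    qed
    moreover have "foldl \<delta> s (take j (drop i w)) \<in> insert s S" if "0 < j" "j < length (drop i w)" for j
    proof -
      have "foldl \<delta> s (take j (drop i w)) = foldl \<delta> p (take (i + j) w)"
        using foldl_take_add[of \<delta> p i j w] si by simp
      then show ?thesis using assms(1) that i unfolding paths_def by auto
    qed
    ultimately show ?thesis using wl unfolding paths_def by (auto dest: in_set_dropD)
  qed
  show ?thesis using i 1 2 by blast
qed

lemma star_paths: "x \<in> star (paths \<delta> Sig S s s) \<Longrightarrow> x \<in> paths \<delta> Sig (insert s S) s s"
proof (induction rule: star_induct)
  case Nil then show ?case by (simp add: paths_def)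
next
  case (step u v)
  have "u \<in> paths \<delta> Sig (insert s S) s s" using step(1) paths_mono[of S "insert s S"] by blast
  then show ?case using step paths_app by fastforce
qed

lemma paths_loop: "w \<in> paths \<delta> Sig (insert s S) s q \<Longrightarrow> w \<in> conc (star (paths \<delta> Sig S s s)) (paths \<delta> Sig S s q)"
proof (induction "length w" arbitrary: w rule: less_induct)
  case less
  show ?case
  proof (cases "w \<in> paths \<delta> Sig S s q")
    case True then show ?thesis using concI[of "[]" _ w] by simp
  next
    case False
    then obtain i where i: "0 < i" "i < length w" "take i w \<in> paths \<delta> Sig S s s"
      "drop i w \<in> paths \<delta> Sig (insert s S) s q"
      using paths_split[OF less.prems] by blast
    then have "drop i w \<in> conc (star (paths \<delta> Sig S s s)) (paths \<delta> Sig S s q)"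
      using less.hyps[of "drop i w"] by simp
    then obtain x y where "drop i w = x @ y" "x \<in> star (paths \<delta> Sig S s s)" "y \<in> paths \<delta> Sig S s q"
      by (auto simp: conc_def)
    then have "w = (take i w @ x) @ y" "take i w @ x \<in> star (paths \<delta> Sig S s s)"
      using i(3) star_step by (metis append.assoc append_take_drop_id, blast)
    then show ?thesis using \<open>y \<in> _\<close> concI by metis
  qed
qed

lemma paths_insert:
  "paths \<delta> Sig (insert s S) p q = paths \<delta> Sig S p q \<union>
     conc (paths \<delta> Sig S p s) (conc (star (paths \<delta> Sig S s s)) (paths \<delta> Sig S s q))"
proof (rule set_eqI, rule iffI)
  fix w assume w: "w \<in> paths \<delta> Sig (insert s S) p q"
  show "w \<in> paths \<delta> Sig S p q \<union> conc (paths \<delta> Sig S p s) (conc (star (paths \<delta> Sig S s s)) (paths \<delta> Sig S s q))"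
  proof (cases "w \<in> paths \<delta> Sig S p q")
    case False
    then obtain i where "take i w \<in> paths \<delta> Sig S p s" "drop i w \<in> paths \<delta> Sig (insert s S) s q"
      using paths_split[OF w] by blast
    then have "take i w @ drop i w \<in> conc (paths \<delta> Sig S p s) (conc (star (paths \<delta> Sig S s s)) (paths \<delta> Sig S s q))"
      using paths_loop concI by metis
    then show ?thesis by simp
  qed simp
next
  fix w assume "w \<in> paths \<delta> Sig S p q \<union> conc (paths \<delta> Sig S p s) (conc (star (paths \<delta> Sig S s s)) (paths \<delta> Sig S s q))"
  then show "w \<in> paths \<delta> Sig (insert s S) p q"
  proof
    assume "w \<in> paths \<delta> Sig S p q" then show ?thesis using paths_mono[of S "insert s S"] by blast
  next
    assume "w \<in> conc (paths \<delta> Sig S p s) (conc (star (paths \<delta> Sig S s s)) (paths \<delta> Sig S s q))"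
    then obtain u x y where w: "w = u @ (x @ y)" "u \<in> paths \<delta> Sig S p s" "x \<in> star (paths \<delta> Sig S s s)"
      "y \<in> paths \<delta> Sig S s q" by (auto simp: conc_def)
    have u: "u \<in> paths \<delta> Sig (insert s S) p s" using w(2) paths_mono[of S "insert s S"] by blast
    have y: "y \<in> paths \<delta> Sig (insert s S) s q" using w(4) paths_mono[of S "insert s S"] by blast
    have x: "x \<in> paths \<delta> Sig (insert s S) s s" by (rule star_paths[OF w(3)])
    show ?thesis using paths_app[OF u paths_app[OF x y insertI1] insertI1] w(1) by simp
  qed
qed

lemma regular_paths:
  assumes "finite Sig" "finite S"
  shows "regular Sig (paths \<delta> Sig S p q)"
  using assms(2)
proof (induction S arbitrary: p q rule: finite_induct)
  case empty
  have "regular Sig ((\<lambda>a. [a]) ` {a\<in>Sig. \<delta> p a = q})" using assms(1) by (intro regular_letters) auto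
  then show ?case unfolding paths_empty
    using reg_union[OF reg_eps] reg_union[OF reg_empty] by (cases "p = q") simp_all
next
  case (insert s S)
  then show ?case unfolding paths_insert by (intro reg_union reg_conc regular_star)
qed

lemma foldl_deriv: "foldl (\<lambda>X a. deriv [a] X) X w = deriv w X"
  by (induction w arbitrary: X) (auto simp: deriv_def)

lemma regular_compl:
  assumes "finite Sig" "regular Sig L"
  shows "regular Sig (lists Sig - L)"
proof -
  let ?D = "range (\<lambda>w. deriv w L)"
  let ?d = "\<lambda>X a. deriv [a] X"
  have fin: "finite ?D" using finite_derivs[OF assms(2)] .
  have "lists Sig - L = (\<Union>q\<in>{Y\<in>?D. [] \<notin> Y}. paths ?d Sig ?D L q)"
  proof (rule set_eqI, rule iffI)
    fix w assume "w \<in> lists Sig - L"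
    then show "w \<in> (\<Union>q\<in>{Y\<in>?D. [] \<notin> Y}. paths ?d Sig ?D L q)"
      unfolding paths_def foldl_deriv by (auto simp: deriv_def)
  next
    fix w assume "w \<in> (\<Union>q\<in>{Y\<in>?D. [] \<notin> Y}. paths ?d Sig ?D L q)"
    then show "w \<in> lists Sig - L"
      unfolding paths_def foldl_deriv by (auto simp: deriv_def)
  qed
  moreover have "regular Sig (\<Union>q\<in>{Y\<in>?D. [] \<notin> Y}. paths ?d Sig ?D L q)"
    using fin assms(1) by (intro regular_UN regular_paths ballI) auto
  ultimately show ?thesis by simp
qed



lemma subst_word_append: "subst_word phi (xs @ ys) = conc (subst_word phi xs) (subst_word phi ys)"
  by (induction xs) (simp_all add: conc_assoc)

lemma subst_regular: "reg_subst Del Sig phi \<Longrightarrow> w \<in> lists Del \<Longrightarrow> regular Sig (subst_word phi w)"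
  by (induction w) (auto simp: reg_subst_def intro: reg_eps reg_conc)

lemma part2:
  assumes Sig: "alphabet Sig" and R: "rational_set Sig R" and fin: "finite R"
  shows "rational_set Sig (pcompl Sig R) \<and> finite (pcompl Sig R)"
proof -
  obtain Del :: "nat set" and K phi where D: "alphabet Del" "reg_plus Del K" "reg_subst Del Sig phi"
    and RK: "R = rat_of K phi" using R unfolding rational_set_def by blast
  have finP: "finite (pcompl Sig R)" using fin unfolding pcompl_def by simp
  have regP: "regular Sig M" if M: "M \<in> pcompl Sig R" for M
  proof -
    obtain L where "M = lists Sig - L" "L \<in> rat_of K phi"
      using M unfolding pcompl_def RK by (rule imageE)
    moreover obtain w where "L = subst_word phi w" "w \<in> K"
      using \<open>L \<in> rat_of K phi\<close> unfolding rat_of_def by (rule imageE)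
    ultimately have "w \<in> K" "M = lists Sig - subst_word phi w" by simp_all
    moreover have "w \<in> lists Del" using \<open>w \<in> K\<close> D(2) unfolding reg_plus_def by blast
    ultimately show ?thesis using regular_compl[OF _ subst_regular[OF D(3)]] Sig
      unfolding alphabet_def by simp
  qed
  obtain k and f :: "nat \<Rightarrow> 'a list set" where f: "pcompl Sig R = f ` {i. i < k}"
    using finite_imp_nat_seg_image_inj_on[OF finP] by blast
  define phi' where "phi' = (\<lambda>i. if i < k then f i else {})"
  define K' where "K' = (\<lambda>i::nat. [i]) ` {i. i < k}"
  have "alphabet {..k}" unfolding alphabet_def by auto
  moreover have "reg_plus {..k} K'"
    unfolding reg_plus_def K'_def by (auto intro: regular_letters)
  moreover have "reg_subst {..k} Sig phi'"
    unfolding reg_subst_def phi'_def using regP f by (auto intro: reg_empty)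
  moreover have "pcompl Sig R = rat_of K' phi'"
    unfolding f rat_of_def K'_def phi'_def by (auto simp: image_image)
  ultimately have "rational_set Sig (pcompl Sig R)" unfolding rational_set_def by blast
  then show ?thesis using finP by simp
qed

lemma subst_const_eps: "subst_word (\<lambda>_. {[]}) w = {[]}"
  by (induction w) simp_all

lemma part3:
  assumes Sig: "alphabet Sig"
  shows "\<exists>(Del :: nat set) phi K.
           alphabet Del \<and> reg_subst Del Sig phi \<and> reg_plus Del K \<and>
           finite (rat_of K phi) \<and>
           \<not> (\<exists>K'. reg_plus Del K' \<and> pcompl Sig (rat_of K phi) = rat_of K' phi)"
proof (intro exI conjI)
  show "alphabet {0::nat}" by (simp add: alphabet_def)
  show "reg_subst {0::nat} Sig (\<lambda>_. {[]})" by (simp add: reg_subst_def reg_eps)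
  show "reg_plus {0::nat} {[0]}" by (auto simp: reg_plus_def intro: reg_letter)
  show "finite (rat_of {[0::nat]} (\<lambda>_. {[]}))" by (simp add: rat_of_def)
  show "\<not> (\<exists>K'. reg_plus {0::nat} K' \<and> pcompl Sig (rat_of {[0::nat]} (\<lambda>_. {[]})) = rat_of K' (\<lambda>_. {[]}))"
  proof
    assume "\<exists>K'. reg_plus {0::nat} K' \<and> pcompl Sig (rat_of {[0::nat]} (\<lambda>_. {[]})) = rat_of K' (\<lambda>_. {[]})"
    then obtain K' :: "nat list set" where E0': "reg_plus {0::nat} K' \<and> pcompl Sig (rat_of {[0::nat]} (\<lambda>_. {[]})) = rat_of K' (\<lambda>_. {[]})" by (rule exE)
    then have E: "pcompl Sig (rat_of {[0::nat]} (\<lambda>_. {[]})) = rat_of K' (\<lambda>_. {[]})" by (rule conjunct2)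
    have E0: "rat_of {[0::nat]} (\<lambda>_. {[]::'a list}) = {{[]}}"
      by (simp add: rat_of_def subst_const_eps del: subst_word.simps)
    have E1: "pcompl Sig {{[]}} = {lists Sig - {[]}}" unfolding pcompl_def by simp
    have E2: "{lists Sig - {[]}} = rat_of K' (\<lambda>_. {[]})" using E by (simp only: E0 E1)
    have "lists Sig - {[]} \<in> subst_word (\<lambda>_. {[]}) ` K'"
      unfolding rat_of_def[symmetric] E2[symmetric] by (rule singletonI)
    then obtain w where "lists Sig - {[]} = subst_word (\<lambda>_. {[]}) w" "w \<in> K'" by (rule imageE)
    then have "lists Sig - {[]} = {[]}" by (simp only: subst_const_eps)
    then show False by blast
  qed
qed



lemma shorten:
  assumes reg: "regular Del K"
    and eps: "\<And>w. w \<in> K \<Longrightarrow> [] \<in> subst_word psi w"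
    and anti: "\<And>w w'. w \<in> K \<Longrightarrow> w' \<in> K \<Longrightarrow> subst_word psi w' \<subseteq> subst_word psi w \<Longrightarrow> subst_word psi w' = subst_word psi w"
    and w: "w \<in> K"
  shows "\<exists>w'\<in>K. length w' \<le> card (range (\<lambda>u. deriv u K)) \<and> subst_word psi w' = subst_word psi w"
  using w
proof (induction "length w" arbitrary: w rule: less_induct)
  case less
  let ?D = "range (\<lambda>u. deriv u K)"
  let ?N = "card ?D"
  have finD: "finite ?D" using finite_derivs[OF reg] .
  show ?case
  proof (cases "length w \<le> ?N")
    case True then show ?thesis using less.prems by blast
  next
    case False
    let ?f = "\<lambda>i. deriv (take i w) K"
    have "\<not> inj_on ?f {..?N}"
    proof
      assume "inj_on ?f {..?N}"
      moreover have "?f ` {..?N} \<subseteq> ?D" by auto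
      ultimately have "card {..?N} \<le> ?N" using card_inj_on_le finD by blast
      then show False by simp
    qed
    then obtain i j where ij: "i \<in> {..?N}" "j \<in> {..?N}" "i \<noteq> j" "?f i = ?f j"
      unfolding inj_on_def by blast
    obtain i j where ij: "i < j" "j \<le> ?N" "?f i = ?f j"
    proof (cases "i < j")
      case True then show ?thesis using that ij by auto
    next
      case False then show ?thesis using that[of j i] ij by auto
    qed
    define m where "m = take (j - i) (drop i w)"
    have dd: "drop i w = m @ drop j w"
      unfolding m_def using ij(1) by (metis append_take_drop_id drop_drop le_add_diff_inverse2 less_imp_le)
    have wsplit: "w = take i w @ m @ drop j w" using dd by (metis append_take_drop_id)
    have "drop j w \<in> deriv (take j w) K" using less.prems by (simp add: deriv_def)
    then have "drop j w \<in> deriv (take i w) K" using ij(3) by simp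
    then have w'K: "take i w @ drop j w \<in> K" by (simp add: deriv_def)
    have len: "length (take i w @ drop j w) < length w"
      using ij False by auto
    let ?A = "subst_word psi (take i w)" and ?B = "subst_word psi m" and ?C = "subst_word psi (drop j w)"
    have sw: "subst_word psi w = conc ?A (conc ?B ?C)"
      by (subst wsplit) (simp add: subst_word_append)
    have "[] \<in> subst_word psi w" using eps less.prems by blast
    then have "[] \<in> ?B" unfolding sw by (simp add: Nil_in_conc)
    then have "?C \<subseteq> conc ?B ?C" using concI[of "[]" ?B] by auto
    then have "subst_word psi (take i w @ drop j w) \<subseteq> subst_word psi w"
      unfolding sw subst_word_append by (intro conc_mono) auto
    then have eq: "subst_word psi (take i w @ drop j w) = subst_word psi w"
      using anti[OF less.prems w'K] by blast
    obtain w'' where "w'' \<in> K" "length w'' \<le> ?N" "subst_word psi w'' = subst_word psi (take i w @ drop j w)"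
      using less.hyps[OF len w'K] by blast
    then show ?thesis using eq by metis
  qed
qed


lemma star_letter: "star {[c]} = lists {c}"
proof (rule set_eqI, rule iffI)
  fix x assume "x \<in> star {[c]}"
  then show "x \<in> lists {c}" by (induction rule: star_induct) auto
next
  fix x assume "x \<in> lists {c}"
  then show "x \<in> star {[c]}"
  proof (induction x)
    case (Cons y ys)
    then have "[c] @ ys \<in> star {[c]}" by (intro star_step) auto
    then show ?case using Cons by simp
  qed simp
qed

lemma plus_letter: "lists {c} - {[]} = conc {[c]} (star {[c]})"
proof (rule set_eqI, rule iffI)
  fix x assume "x \<in> lists {c} - {[]}"
  then obtain ys where "x = [c] @ ys" "ys \<in> lists {c}" by (cases x) auto
  then show "x \<in> conc {[c]} (star {[c]})" using concI star_letter by (metis singletonI)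
next
  fix x assume "x \<in> conc {[c]} (star {[c]})"
  then show "x \<in> lists {c} - {[]}" by (auto simp: conc_def star_letter)
qed

lemma subst_rep: "subst_word (\<lambda>_. {[a]}) w = {replicate (length w) a}"
  by (induction w) (auto simp: conc_def)

lemma part1:
  assumes Sig: "alphabet Sig"
  shows "\<exists>R. rational_set Sig R \<and> \<not> rational_set Sig (pcompl Sig R)"
proof -
  obtain a where a: "a \<in> Sig" using Sig unfolding alphabet_def by blast
  define K :: "nat list set" where "K = lists {0} - {[]}"
  define R where "R = rat_of K (\<lambda>_. {[a]})"
  have ratR: "rational_set Sig R"
    unfolding rational_set_def
  proof (intro exI conjI)
    show "alphabet {0::nat}" by (simp add: alphabet_def)
    have "regular {0::nat} (lists {0} - {[]})" unfolding plus_letter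
      by (intro reg_conc reg_letter regular_star) auto
    then show "reg_plus {0} K" unfolding reg_plus_def K_def by auto
    show "reg_subst {0} Sig (\<lambda>_. {[a]})" using a by (simp add: reg_subst_def reg_letter)
    show "R = rat_of K (\<lambda>_. {[a]})" by (rule R_def)
  qed
  have P: "M \<in> pcompl Sig R \<longleftrightarrow> (\<exists>n>0. M = lists Sig - {replicate n a})" for M
  proof
    assume "M \<in> pcompl Sig R"
    then obtain w where "w \<in> K" "M = lists Sig - subst_word (\<lambda>_. {[a]}) w"
      unfolding pcompl_def R_def rat_of_def by blast
    then show "\<exists>n>0. M = lists Sig - {replicate n a}"
      by (intro exI[of _ "length w"]) (auto simp: subst_rep K_def)
  next
    assume "\<exists>n>0. M = lists Sig - {replicate n a}"
    then obtain n where n: "n > 0" "M = lists Sig - {replicate n a}" by blast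
    then have "replicate n (0::nat) \<in> K" unfolding K_def by auto
    moreover have "M = lists Sig - subst_word (\<lambda>_. {[a]}) (replicate n (0::nat))"
      using n by (simp add: subst_rep)
    ultimately show "M \<in> pcompl Sig R" unfolding pcompl_def R_def rat_of_def by blast
  qed
  have eps: "[] \<in> M" if "M \<in> pcompl Sig R" for M
    using that P by auto
  have anti: "M1 = M2" if h: "M1 \<in> pcompl Sig R" "M2 \<in> pcompl Sig R" "M1 \<subseteq> M2" for M1 M2
  proof -
    obtain n1 where n1: "M1 = lists Sig - {replicate n1 a}" using P h(1) by blast
    obtain n2 where n2: "M2 = lists Sig - {replicate n2 a}" using P h(2) by blast
    have "replicate n2 a \<in> lists Sig" using a by auto
    then have "replicate n2 a = replicate n1 a" using h(3) n1 n2 by blast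
    then show ?thesis using n1 n2 by simp
  qed
  have infP: "infinite (pcompl Sig R)"
  proof
    assume fin: "finite (pcompl Sig R)"
    let ?g = "\<lambda>n. lists Sig - {replicate (Suc n) a}"
    have "range ?g \<subseteq> pcompl Sig R" using P by blast
    moreover have "inj ?g"
    proof (rule injI)
      fix n m assume h: "?g n = ?g m"
      have "replicate (Suc m) a \<in> lists Sig" using a by auto
      then have "replicate (Suc m) a = replicate (Suc n) a" using h by blast
      then show "n = m" by (metis Suc_inject length_replicate)
    qed
    ultimately show False using fin by (meson finite_subset infinite_iff_countable_subset)
  qed
  have "\<not> rational_set Sig (pcompl Sig R)"
  proof
    assume "rational_set Sig (pcompl Sig R)"
    then obtain Del :: "nat set" and K' psi where D: "alphabet Del" "reg_plus Del K'"
      and E: "pcompl Sig R = rat_of K' psi" unfolding rational_set_def by blast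
    have regK: "regular Del K'" and subK: "K' \<subseteq> lists Del" using D(2) by (auto simp: reg_plus_def)
    let ?N = "card (range (\<lambda>u. deriv u K'))"
    have mem: "subst_word psi w \<in> pcompl Sig R" if "w \<in> K'" for w
      using that unfolding E rat_of_def by blast
    have e1: "\<And>w. w \<in> K' \<Longrightarrow> [] \<in> subst_word psi w" using eps mem by blast
    have a1: "\<And>w w'. w \<in> K' \<Longrightarrow> w' \<in> K' \<Longrightarrow> subst_word psi w' \<subseteq> subst_word psi w \<Longrightarrow> subst_word psi w' = subst_word psi w"
      using anti mem by blast
    have "pcompl Sig R \<subseteq> subst_word psi ` {xs. set xs \<subseteq> Del \<and> length xs \<le> ?N}"
    proof
      fix M assume "M \<in> pcompl Sig R"
      then obtain w where w: "w \<in> K'" "M = subst_word psi w" unfolding E rat_of_def by blast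
      obtain w' where "w' \<in> K'" "length w' \<le> ?N" "subst_word psi w' = subst_word psi w"
        using shorten[OF regK e1 a1 w(1)] by blast
      then show "M \<in> subst_word psi ` {xs. set xs \<subseteq> Del \<and> length xs \<le> ?N}"
        using w subK by blast
    qed
    moreover have "finite {xs. set xs \<subseteq> Del \<and> length xs \<le> ?N}"
      using D(1) unfolding alphabet_def by (intro finite_lists_length_le) auto
    ultimately show False using infP finite_subset by blast
  qed
  then show ?thesis using ratR by blast
qed

theorem proposition4:
  fixes Sig :: "'a set"
  assumes "alphabet Sig"
  shows "(\<exists>R. rational_set Sig R \<and> \<not> rational_set Sig (pcompl Sig R))
    \<and> (\<forall>R. rational_set Sig R \<and> finite R \<longrightarrow>
           rational_set Sig (pcompl Sig R) \<and> finite (pcompl Sig R))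
    \<and> (\<exists>(Del :: nat set) phi K.
           alphabet Del \<and> reg_subst Del Sig phi \<and> reg_plus Del K \<and>
           finite (rat_of K phi) \<and>
           \<not> (\<exists>K'. reg_plus Del K' \<and> pcompl Sig (rat_of K phi) = rat_of K' phi))"
  using part1[OF assms] part2[OF assms] part3[OF assms] by blast

end
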